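(* Let $f$ be a four times continuously differentiable convex function on $[0,\infty)$ with $f(1)=1$, and let $g(x)=x^2f''(x)$. Suppose $g\ge 0$ on $[0,\infty)$ and $x^2g''(x)-g(\alpha)\,g(x/\alpha)\le 0$ for all $x\ge0$ and all $\alpha>0$. Then for all finite sets $\mathcal{Y},\mathcal{Z}$ and all distributions $q_Y\ll r_Y$ on $\mathcal{Y}$, $q_Z\ll r_Z$ on $\mathcal{Z}$, $$D_f(q_Yq_Z\|r_Yr_Z)\le D_f(q_Y\|r_Y)\,D_f(q_Z\|r_Z).$$ Equivalently, with $\hat f=f-1$, $\log(1+D_{\hat f}(q_Yq_Z\|r_Yr_Z))\le \log(1+D_{\hat f}(q_Y\|r_Y))+\log(1+D_{\hat f}(q_Z\|r_Z))$.
   Context: For distributions $p\ll q$ on a finite set and any function $f$ on $[0,\infty)$, $D_f(p\|q)=\sum_x q(x) f(p(x)/q(x))$ with the convention $0f(0/0)=0$. *)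

theory Defs
  imports "HOL-Analysis.Analysis"
begin

definition is_dist :: "'a set \<Rightarrow> ('a \<Rightarrow> real) \<Rightarrow> bool" where
  "is_dist A p \<longleftrightarrow> (\<forall>x\<in>A. 0 \<le> p x) \<and> sum p A = 1"

definition abs_cont :: "'a set \<Rightarrow> ('a \<Rightarrow> real) \<Rightarrow> ('a \<Rightarrow> real) \<Rightarrow> bool" where
  "abs_cont A p q \<longleftrightarrow> (\<forall>x\<in>A. q x = 0 \<longrightarrow> p x = 0)"

text \<open>f-divergence D_f(p||q) on a finite set A, with the convention 0 f(0/0) = 0.\<close>
definition fdiv :: "(real \<Rightarrow> real) \<Rightarrow> 'a set \<Rightarrow> ('a \<Rightarrow> real) \<Rightarrow> ('a \<Rightarrow> real) \<Rightarrow> real" where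
  "fdiv f A p q = (\<Sum>x\<in>A. if q x = 0 then 0 else q x * f (p x / q x))"

definition prod_dist :: "('a \<Rightarrow> real) \<Rightarrow> ('b \<Rightarrow> real) \<Rightarrow> ('a \<times> 'b \<Rightarrow> real)" where
  "prod_dist p q = (\<lambda>(y, z). p y * q z)"

end

theory Submission
  imports Defs
begin

lemma tangent_ge:
  fixes u u1 u2 :: "real \<Rightarrow> real"
  assumes d1: "\<And>x. x > 0 \<Longrightarrow> (u has_real_derivative u1 x) (at x)"
    and d2: "\<And>x. x > 0 \<Longrightarrow> (u1 has_real_derivative u2 x) (at x)"
    and nn: "\<And>x. x > 0 \<Longrightarrow> u2 x \<ge> 0"
    and cu: "continuous_on {0..} u"
    and x: "x \<ge> 0"
  shows "u x \<ge> u 1 + u1 1 * (x - 1)"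
proof -
  have mono: "u1 s \<le> u1 t" if "0 < s" "s \<le> t" for s t
  proof (rule DERIV_nonneg_imp_increasing_open[OF that(2)])
    show "\<exists>y. DERIV u1 x :> y \<and> 0 \<le> y" if "s < x" "x < t" for x
      using d2 nn that \<open>0 < s\<close> by (meson less_trans)
    show "continuous_on {s..t} u1"
      by (rule DERIV_continuous_on[where D=u2], rule DERIV_subset[OF d2]) (use \<open>0<s\<close> in auto)
  qed
  have cvx: "convex_on {0<..} u"
    by (rule convex_on_realI[where f'=u1]) (auto intro: d1 mono)
  have pos: "u y - u 1 \<ge> u1 1 * (y - 1)" if "y > 0" for y
    by (rule convex_on_imp_above_tangent[OF cvx])
       (use that d1[of 1] in \<open>auto simp: interior_open intro: has_field_derivative_at_within\<close>)
  have "(\<lambda>y. u y - u1 1 * (y - 1)) y \<ge> u 1" if "y \<in> closure {0<..}" for y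
    by (rule continuous_ge_on_closure[OF _ that])
       (use cu in \<open>auto intro!: continuous_intros\<close>, smt (verit) pos)
  from this[of x] x show ?thesis by auto
qed

lemma fdiv_ge:
  fixes h :: "real \<Rightarrow> real"
  assumes "finite A" "is_dist A q" "is_dist A r" "abs_cont A q r"
    and tan: "\<And>x. x \<ge> 0 \<Longrightarrow> h x \<ge> h 1 + d * (x - 1)"
  shows "fdiv h A q r \<ge> h 1"
proof -
  have "(\<Sum>x\<in>A. h 1 * r x + d * (q x - r x)) \<le> fdiv h A q r"
    unfolding fdiv_def
  proof (rule sum_mono)
    fix x assume xA: "x \<in> A"
    show "h 1 * r x + d * (q x - r x) \<le> (if r x = 0 then 0 else r x * h (q x / r x))"
    proof (cases "r x = 0")
      case True thus ?thesis using assms(4) xA by (simp add: abs_cont_def)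
    next
      case False
      have r0: "r x > 0" using False assms(3) xA by (force simp: is_dist_def)
      have q0: "q x / r x \<ge> 0" using assms(2) xA r0 by (simp add: is_dist_def)
      have "r x * (h 1 + d * (q x / r x - 1)) \<le> r x * h (q x / r x)"
        using tan[OF q0] r0 by simp
      also have "r x * (h 1 + d * (q x / r x - 1)) = h 1 * r x + d * (q x - r x)"
        using r0 by (simp add: field_simps)
      finally show ?thesis using False by simp
    qed
  qed
  moreover have "(\<Sum>x\<in>A. h 1 * r x + d * (q x - r x)) = h 1"
    using assms(2,3) by (simp add: sum.distrib sum_subtractf sum_distrib_left[symmetric] is_dist_def)
  ultimately show ?thesis by simp
qed

lemma fdiv_lin: "fdiv (\<lambda>x. c * f x - g x) A p q = c * fdiv f A p q - fdiv g A p q"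
  unfolding fdiv_def by (simp add: sum_distrib_left sum_subtractf[symmetric] algebra_simps if_distrib cong: if_cong)

lemma deriv_scaled:
  fixes w w1 :: "real \<Rightarrow> real"
  assumes d: "\<And>x. x > 0 \<Longrightarrow> (w has_real_derivative w1 x) (at x)" and a: "a > 0" and b: "b \<ge> 0"
  shows "((\<lambda>a. w (a * b)) has_real_derivative b * w1 (a * b)) (at a)"
proof (cases "b = 0")
  case True thus ?thesis by simp
next
  case False
  hence "a * b > 0" using a b by simp
  have "((\<lambda>a. a * b) has_real_derivative b) (at a)"
    by (auto intro!: derivative_eq_intros)
  from DERIV_chain2[OF d[OF \<open>a * b > 0\<close>] this]
  show ?thesis by (simp add: mult.commute)
qed

lemma deriv_sum_scaled:
  fixes w w1 :: "real \<Rightarrow> real" and r e s :: "'b \<Rightarrow> real"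
  assumes d: "\<And>x. x > 0 \<Longrightarrow> (w has_real_derivative w1 x) (at x)" and a: "a > 0"
    and b: "\<And>z. z \<in> Z \<Longrightarrow> 0 \<le> s z"
  shows "((\<lambda>a. \<Sum>z\<in>Z. if r z = 0 then 0 else e z * w (a * s z)) has_real_derivative
     (\<Sum>z\<in>Z. if r z = 0 then 0 else e z * (s z * w1 (a * s z)))) (at a)"
proof (rule DERIV_sum)
  fix z assume "z \<in> Z"
  show "((\<lambda>a. if r z = 0 then 0 else e z * w (a * s z)) has_real_derivative
     (if r z = 0 then 0 else e z * (s z * w1 (a * s z)))) (at a)"
    using DERIV_cmult[OF deriv_scaled[OF d a b[OF \<open>z \<in> Z\<close>]], of "e z"]
    by (cases "r z = 0") auto
qed

lemma within_to_at:
  assumes "(F has_real_derivative D) (at x within {0..})" "x > 0"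
  shows "(F has_real_derivative D) (at x)"
  using assms at_within_interior[of x "{0::real..}"] by simp

lemma cont_scaled:
  assumes "continuous_on {0..} (w::real\<Rightarrow>real)" "s \<ge> 0"
  shows "continuous_on {0..} (\<lambda>a. w (a * s))"
proof (rule continuous_on_compose2[OF assms(1)])
  show "continuous_on {0..} (\<lambda>a. a * s)" by (intro continuous_intros)
  show "(\<lambda>a. a * s) ` {0..} \<subseteq> {0..}" using assms(2) by auto
qed

theorem theorem3:
  fixes f f1 f2 f3 f4 g g1 g2 :: "real \<Rightarrow> real"
    and Y :: "'a set" and Z :: "'b set"
    and qY rY :: "'a \<Rightarrow> real" and qZ rZ :: "'b \<Rightarrow> real"
  assumes d1: "\<And>x. 0 \<le> x \<Longrightarrow> (f has_real_derivative f1 x) (at x within {0..})"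
    and d2: "\<And>x. 0 \<le> x \<Longrightarrow> (f1 has_real_derivative f2 x) (at x within {0..})"
    and d3: "\<And>x. 0 \<le> x \<Longrightarrow> (f2 has_real_derivative f3 x) (at x within {0..})"
    and d4: "\<And>x. 0 \<le> x \<Longrightarrow> (f3 has_real_derivative f4 x) (at x within {0..})"
    and c4: "continuous_on {0..} f4"
    and cvx: "convex_on {0..} f"
    and f_one: "f 1 = 1"
    and g_def: "\<And>x. g x = x\<^sup>2 * f2 x"
    and g'1: "\<And>x. 0 \<le> x \<Longrightarrow> (g has_real_derivative g1 x) (at x within {0..})"
    and g'2: "\<And>x. 0 \<le> x \<Longrightarrow> (g1 has_real_derivative g2 x) (at x within {0..})"
    and g_nonneg: "\<And>x. 0 \<le> x \<Longrightarrow> 0 \<le> g x"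
    and g_cond: "\<And>x \<alpha>. 0 \<le> x \<Longrightarrow> 0 < \<alpha> \<Longrightarrow> x\<^sup>2 * g2 x - g \<alpha> * g (x / \<alpha>) \<le> 0"
    and fin: "finite Y" "finite Z"
    and dists: "is_dist Y qY" "is_dist Y rY" "is_dist Z qZ" "is_dist Z rZ"
    and ac: "abs_cont Y qY rY" "abs_cont Z qZ rZ"
  shows "fdiv f (Y \<times> Z) (prod_dist qY qZ) (prod_dist rY rZ)
           \<le> fdiv f Y qY rY * fdiv f Z qZ rZ"
proof -
  define c where "c = fdiv f Z qZ rZ"
  define bz where "bz z = qZ z / rZ z" for z
  have bz0: "0 \<le> bz z" if "z \<in> Z" for z
    using dists(3,4) that by (simp add: bz_def is_dist_def)
  have f1at: "\<And>x. x > 0 \<Longrightarrow> (f has_real_derivative f1 x) (at x)"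
    using d1 within_to_at by simp
  have f2at: "\<And>x. x > 0 \<Longrightarrow> (f1 has_real_derivative f2 x) (at x)"
    using d2 within_to_at by simp
  have g1at: "\<And>x. x > 0 \<Longrightarrow> (g has_real_derivative g1 x) (at x)"
    using g'1 within_to_at by simp
  have g2at: "\<And>x. x > 0 \<Longrightarrow> (g1 has_real_derivative g2 x) (at x)"
    using g'2 within_to_at by simp
  have cf: "continuous_on {0..} f" by (rule DERIV_continuous_on[OF d1]) simp
  have cg: "continuous_on {0..} g" by (rule DERIV_continuous_on[OF g'1]) simp
  have key: "fdiv (\<lambda>b. g (b * a)) Z qZ rZ \<le> g a * c" if a: "a > 0" for a
  proof -
    define k where "k b = g a * f b - g (b * a)" for b
    have "k 1 \<le> fdiv k Z qZ rZ"
    proof (rule fdiv_ge[OF fin(2) dists(3,4) ac(2)])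
      fix x :: real assume x: "0 \<le> x"
      show "k 1 + (g a * f1 1 - a * g1 (1 * a)) * (x - 1) \<le> k x"
      proof (rule tangent_ge[of k "\<lambda>b. g a * f1 b - a * g1 (b * a)"
            "\<lambda>b. g a * f2 b - a * (a * g2 (b * a))", OF _ _ _ _ x])
        fix b :: real assume b: "b > 0"
        show "(k has_real_derivative g a * f1 b - a * g1 (b * a)) (at b)"
          unfolding k_def
          by (rule DERIV_diff[OF DERIV_cmult[OF f1at[OF b]] deriv_scaled[OF g1at b less_imp_le[OF a]]])
        show "((\<lambda>b. g a * f1 b - a * g1 (b * a)) has_real_derivative g a * f2 b - a * (a * g2 (b * a))) (at b)"
          by (rule DERIV_diff[OF DERIV_cmult[OF f2at[OF b]] DERIV_cmult[OF deriv_scaled[OF g2at b less_imp_le[OF a]]]])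
        have "(b * a)\<^sup>2 * g2 (b * a) - g a * g (b * a / a) \<le> 0"
          using g_cond[of "b * a" a] a b by simp
        hence "b\<^sup>2 * (g a * f2 b - a * (a * g2 (b * a))) \<ge> 0"
          using a by (simp add: g_def power2_eq_square algebra_simps)
        thus "0 \<le> g a * f2 b - a * (a * g2 (b * a))"
          using b by (simp add: zero_le_mult_iff)
      next
        show "continuous_on {0..} k"
          unfolding k_def
          by (intro continuous_intros cf cont_scaled[OF cg]) (use a in auto)
      qed
    qed
    moreover have "k 1 = 0" using f_one by (simp add: k_def)
    moreover have "fdiv k Z qZ rZ = g a * c - fdiv (\<lambda>b. g (b * a)) Z qZ rZ"
      unfolding k_def c_def by (rule fdiv_lin)
    ultimately show ?thesis by simp
  qed
  define Phi where "Phi a = fdiv (\<lambda>b. f (a * b)) Z qZ rZ" for a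
  have Phi_eq: "Phi a = (\<Sum>z\<in>Z. if rZ z = 0 then 0 else rZ z * f (a * bz z))" for a
    unfolding Phi_def fdiv_def bz_def by (rule refl)
  define h where "h a = c * f a - Phi a" for a
  define h1 where "h1 a = c * f1 a - (\<Sum>z\<in>Z. if rZ z = 0 then 0 else rZ z * (bz z * f1 (a * bz z)))" for a
  define S where "S a = (\<Sum>z\<in>Z. if rZ z = 0 then 0 else (rZ z * bz z) * (bz z * f2 (a * bz z)))" for a
  have hY: "h 1 \<le> fdiv h Y qY rY"
  proof (rule fdiv_ge[OF fin(1) dists(1,2) ac(1)])
    fix x :: real assume x: "0 \<le> x"
    show "h 1 + h1 1 * (x - 1) \<le> h x"
    proof (rule tangent_ge[of h h1 "\<lambda>a. c * f2 a - S a", OF _ _ _ _ x])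
      fix a :: real assume a: "a > 0"
      show "(h has_real_derivative h1 a) (at a)"
        unfolding h_def h1_def Phi_eq[abs_def]
        by (rule DERIV_diff[OF DERIV_cmult[OF f1at[OF a]] deriv_sum_scaled[OF f1at a bz0]])
      show "(h1 has_real_derivative c * f2 a - S a) (at a)"
        unfolding h1_def S_def[abs_def]
        using DERIV_diff[OF DERIV_cmult[OF f2at[OF a], of c] deriv_sum_scaled[where r=rZ and e="\<lambda>z. rZ z * bz z" and s=bz and Z=Z, OF f2at a bz0]]
        by (simp add: mult.assoc cong: if_cong sum.cong)
      have "fdiv (\<lambda>b. g (b * a)) Z qZ rZ = a\<^sup>2 * S a"
        unfolding fdiv_def S_def sum_distrib_left
        by (rule sum.cong) (auto simp: g_def bz_def power2_eq_square algebra_simps)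
      with key[OF a] have "a\<^sup>2 * S a \<le> a\<^sup>2 * (c * f2 a)"
        by (simp add: g_def algebra_simps)
      thus "0 \<le> c * f2 a - S a" using a by simp
    next
      show "continuous_on {0..} h"
        unfolding h_def Phi_eq[abs_def]
      proof (intro continuous_intros cf continuous_on_sum)
        fix z assume "z \<in> Z"
        show "continuous_on {0..} (\<lambda>x. if rZ z = 0 then 0 else rZ z * f (x * bz z))"
          by (cases "rZ z = 0") (auto intro!: continuous_intros cont_scaled[OF cf] bz0 \<open>z \<in> Z\<close>)
      qed
    qed
  qed
  moreover have "h 1 = 0" by (simp add: h_def Phi_def c_def f_one)
  moreover have "fdiv h Y qY rY = c * fdiv f Y qY rY - fdiv Phi Y qY rY"
    unfolding h_def by (rule fdiv_lin)
  moreover have "fdiv f (Y \<times> Z) (prod_dist qY qZ) (prod_dist rY rZ) = fdiv Phi Y qY rY"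
  proof -
    have "fdiv f (Y \<times> Z) (prod_dist qY qZ) (prod_dist rY rZ) =
      (\<Sum>y\<in>Y. \<Sum>z\<in>Z. if rY y * rZ z = 0 then 0 else rY y * rZ z * f (qY y * qZ z / (rY y * rZ z)))"
      unfolding fdiv_def prod_dist_def sum.cartesian_product by (rule sum.cong) auto
    also have "\<dots> = fdiv Phi Y qY rY"
      unfolding fdiv_def Phi_eq
    proof (rule sum.cong[OF refl])
      fix y assume "y \<in> Y"
      show "(\<Sum>z\<in>Z. if rY y * rZ z = 0 then 0 else rY y * rZ z * f (qY y * qZ z / (rY y * rZ z))) =
        (if rY y = 0 then 0 else rY y * (\<Sum>z\<in>Z. if rZ z = 0 then 0 else rZ z * f (qY y / rY y * bz z)))"
        by (cases "rY y = 0") (auto simp: sum_distrib_left bz_def intro!: sum.cong)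
    qed
    finally show ?thesis .
  qed
  ultimately show ?thesis by (simp add: c_def mult.commute)
qed

end
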